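(* Let $X$ be a vertex-weighted simplicial complex on $n$ vertices, fix $k$, and let $U^{down}$ be a $\Pi^\pm_k$-projected $(1,\alpha,0)$-unitary encoding of $\Pi^\pm_kP^{down}\Pi^\pm_k$, i.e. $(\Pi^\pm_k\otimes\langle0^\alpha|)U^{down}(\Pi^\pm_k\otimes|0^\alpha\rangle)=\Pi^\pm_kP^{down}\Pi^\pm_k$. Let $V^{down}=((I_n\otimes HZ\otimes I)\otimes I_\alpha)U^{down}$, where $HZ$ (product of Hadamard and Pauli-$Z$) acts on qubit $n+1$. Then $(\Pi_k\otimes\langle0^\alpha|)V^{down}(\Pi_k\otimes|0^\alpha\rangle)=\frac{\Delta^{down}_k}{K^{down}\sqrt2}$.
   Context: Vertices $V=\{1,\dots,n\}$ with weights $w:V\to(0,\infty)$. $X$ is a family of nonempty subsets of $V$ closed under nonempty subsets; $X_k$ = $k$-simplices (size $k+1$), identified with Hamming-weight-$(k+1)$ strings $x_\sigma\in\{0,1\}^n$. Oriented $k$-simplex: ordering $[v_0,\dots,v_k]$ up to even permutations, positive if an even permutation of the increasing order. $X^\pm_k=X^+_k\cup X^-_k$, $\overline\sigma$ opposite orientation, $\sigma_+$ the positive one of $\sigma,\overline\sigma$. $[v_0,\dots,v_k]$ induces on the face missing $v_j$ the orientation $(-1)^j[v_0,..,\widehat{v_j},..,v_k]$ (sign $-$ meaning opposite orientation). For oriented $\sigma,\sigma'$ with distinct underlying simplices, $\sigma\sim_\downarrow\sigma'$ if they share a $(k-1)$-face and induce the same orientation on it; $v_\sigma$ ($v_{\sigma'}$)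 is the vertex of $\sigma$ not in $\sigma'$ (vice versa). $\Delta^{down}_k$ is the matrix indexed by $X^+_k$ with $(\Delta^{down}_k)_{\sigma\sigma}=\sum_{v\in\sigma}w(v)^2$, $(\Delta^{down}_k)_{\sigma\sigma'}=w(v_\sigma)w(v_{\sigma'})$ if $\sigma\sim_\downarrow\sigma'$, $-w(v_\sigma)w(v_{\sigma'})$ if $\sigma\sim_\downarrow\overline{\sigma'}$, $0$ otherwise. $\Theta$ is an absorbing state, $S_k=X^\pm_k\cup\{\Theta\}$; $|\sigma\rangle$ is the $(n+2)$-qubit state $|x_\sigma\rangle|00\rangle$ ($\sigma\in X^+_k$), $|x_\sigma\rangle|10\rangle$ ($\sigma\in X^-_k$), $|0^n\rangle|01\rangle$ ($\Theta$). $\Pi_k$, $\Pi^\pm_k$ project onto $\mathrm{span}\{|\sigma\rangle\}$ over $X^+_k$, $X^\pm_k$; matrices indexed by $X^+_k$ or $S_k$ act on these spans in this basis and as $0$ elsewhere. $U$ is a $\Pi_s$-projected $(a,\alpha,\epsilon)$-unitary encoding of $A$ if $\|A-a(\Pi_s\otimes\langle0^\alpha|)U(\Pi_s\otimes|0^\alpha\rangle)\|\le\epsilon$. For $\sigma\in X^\pm_k$: $\tilde i(\sigma)$ = position of the $i$-th $1$ of $x_\sigma$, $j(\tau)$ = position of the $j$-th $0$ of $x_\tau$; $\sigma^\downarrow(i)=\sigma\setminus\{\tilde i(\sigma)\}$. $K^{down}=\max_{\sigma\in X^\pm_k}\sum_{i\in[k+1],j\in[n-k]}w(\tilde i(\sigma))w(j(\sigma^\downarrow(i)))$;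 $\eta^{down}_\sigma=1-\frac1{K^{down}}\sum_{\sigma'\in X^+_k}|(\Delta^{down}_k)_{\sigma'\sigma_+}|$. $P^{down}$ on $S_k$: for $\sigma,\sigma'\in X^\pm_k$, $P^{down}_{\sigma\sigma}=\sum_{v\in\sigma}w(v)^2/K^{down}$, $P^{down}_{\sigma\sigma'}=w(v_\sigma)w(v_{\sigma'})/K^{down}$ if $\sigma\sim_\downarrow\sigma'$, $P^{down}_{\sigma\Theta}=\eta^{down}_\sigma$, $P^{down}_{\Theta\Theta}=1$, all other entries $0$. *)

theory Defs
  imports Complex_Main
begin

text \<open>An oriented simplex is represented as a pair (sigma, s): s = False is the
positive orientation (an even permutation of the increasing order),
s = True the negative (opposite) one.\<close>

definition simplicial_complex :: "nat \<Rightarrow> nat set set \<Rightarrow> bool" where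
  "simplicial_complex n X \<longleftrightarrow>
     (\<forall>\<sigma>\<in>X. \<sigma> \<noteq> {} \<and> \<sigma> \<subseteq> {1..n}) \<and>
     (\<forall>\<sigma>\<in>X. \<forall>\<tau>. \<tau> \<subseteq> \<sigma> \<and> \<tau> \<noteq> {} \<longrightarrow> \<tau> \<in> X)"

definition ksimplices :: "nat set set \<Rightarrow> nat \<Rightarrow> nat set set" where
  "ksimplices X k = {\<sigma>\<in>X. card \<sigma> = k + 1}"

definition oriented_ksimplices :: "nat set set \<Rightarrow> nat \<Rightarrow> (nat set \<times> bool) set" where
  "oriented_ksimplices X k = ksimplices X k \<times> UNIV"

text \<open>Sign (True = opposite orientation) of the orientation induced by the
positively oriented simplex on the face missing v: v is v_j in the increasing
order with j = #{u in sigma. u < v}, and the induced orientation is (-1)^j.\<close>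
definition face_sign :: "nat set \<Rightarrow> nat \<Rightarrow> bool" where
  "face_sign \<sigma> v = odd (card {u\<in>\<sigma>. u < v})"

text \<open>Orientation (relative to the increasing order of the face) induced by
the oriented simplex (sigma, s) on the face sigma - {v}.\<close>
definition induced_orient :: "nat set \<times> bool \<Rightarrow> nat \<Rightarrow> bool" where
  "induced_orient \<sigma>s v = (snd \<sigma>s \<noteq> face_sign (fst \<sigma>s) v)"

definition vtx :: "nat set \<Rightarrow> nat set \<Rightarrow> nat" where
  "vtx \<sigma> \<sigma>' = (THE v. v \<in> \<sigma> - \<sigma>')"

text \<open>Lower adjacency of oriented k-simplices: distinct underlying simplices
sharing a (k-1)-face (i.e. their intersection has k elements) on which they
induce the same orientation.\<close>
definition down_adj :: "nat \<Rightarrow> nat set \<times> bool \<Rightarrow> nat set \<times> bool \<Rightarrow> bool" where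
  "down_adj k \<sigma>s \<sigma>s' \<longleftrightarrow>
     fst \<sigma>s \<noteq> fst \<sigma>s' \<and> card (fst \<sigma>s \<inter> fst \<sigma>s') = k \<and>
     induced_orient \<sigma>s (vtx (fst \<sigma>s) (fst \<sigma>s')) =
     induced_orient \<sigma>s' (vtx (fst \<sigma>s') (fst \<sigma>s))"

text \<open>Down Laplacian, indexed by positively oriented k-simplices (identified
with their underlying sets).\<close>
definition Delta_down :: "(nat \<Rightarrow> real) \<Rightarrow> nat \<Rightarrow> nat set \<Rightarrow> nat set \<Rightarrow> real" where
  "Delta_down w k \<sigma> \<sigma>' =
     (if \<sigma> = \<sigma>' then (\<Sum>v\<in>\<sigma>. (w v)\<^sup>2)
      else if down_adj k (\<sigma>, False) (\<sigma>', False) then w (vtx \<sigma> \<sigma>') * w (vtx \<sigma>' \<sigma>)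
      else if down_adj k (\<sigma>, False) (\<sigma>', True) then - (w (vtx \<sigma> \<sigma>') * w (vtx \<sigma>' \<sigma>))
      else 0)"

text \<open>Position of the i-th 1 of x_sigma (1-indexed), and of the j-th 0 of x_tau.\<close>
definition ith_one :: "nat set \<Rightarrow> nat \<Rightarrow> nat" where
  "ith_one \<sigma> i = sorted_list_of_set \<sigma> ! (i - 1)"

definition jth_zero :: "nat \<Rightarrow> nat set \<Rightarrow> nat \<Rightarrow> nat" where
  "jth_zero n \<tau> j = sorted_list_of_set ({1..n} - \<tau>) ! (j - 1)"

definition K_down :: "nat \<Rightarrow> (nat \<Rightarrow> real) \<Rightarrow> nat set set \<Rightarrow> nat \<Rightarrow> real" where
  "K_down n w X k = Max ((\<lambda>\<sigma>s. \<Sum>i\<in>{1..k+1}. \<Sum>j\<in>{1..n-k}.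
        w (ith_one (fst \<sigma>s) i) *
        w (jth_zero n (fst \<sigma>s - {ith_one (fst \<sigma>s) i}) j)) ` oriented_ksimplices X k)"

definition eta_down :: "nat \<Rightarrow> (nat \<Rightarrow> real) \<Rightarrow> nat set set \<Rightarrow> nat \<Rightarrow> nat set \<times> bool \<Rightarrow> real" where
  "eta_down n w X k \<sigma>s = 1 - (1 / K_down n w X k) *
      (\<Sum>\<sigma>'\<in>ksimplices X k. \<bar>Delta_down w k \<sigma>' (fst \<sigma>s)\<bar>)"

text \<open>States S_k: Some (oriented simplex) or None (the absorbing state Theta).\<close>
definition S_states :: "nat set set \<Rightarrow> nat \<Rightarrow> (nat set \<times> bool) option set" where
  "S_states X k = insert None (Some ` oriented_ksimplices X k)"

fun P_down :: "nat \<Rightarrow> (nat \<Rightarrow> real) \<Rightarrow> nat set set \<Rightarrow> nat \<Rightarrow>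
    (nat set \<times> bool) option \<Rightarrow> (nat set \<times> bool) option \<Rightarrow> real" where
  "P_down n w X k (Some \<sigma>s) (Some \<sigma>s') =
     (if \<sigma>s = \<sigma>s' then (\<Sum>v\<in>fst \<sigma>s. (w v)\<^sup>2) / K_down n w X k
      else if down_adj k \<sigma>s \<sigma>s'
        then w (vtx (fst \<sigma>s) (fst \<sigma>s')) * w (vtx (fst \<sigma>s') (fst \<sigma>s)) / K_down n w X k
      else 0)"
| "P_down n w X k (Some \<sigma>s) None = eta_down n w X k \<sigma>s"
| "P_down n w X k None None = 1"
| "P_down n w X k None (Some \<sigma>s') = 0"

text \<open>Computational basis states of m qubits are bool lists of length m
(list position i = qubit i+1, True = 1). An operator is given by its matrix
entries M x y = <x|M|y>.\<close>
type_synonym qop = "bool list \<Rightarrow> bool list \<Rightarrow> complex"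

definition bits :: "nat \<Rightarrow> bool list set" where
  "bits m = {xs. length xs = m}"

definition qmult :: "nat \<Rightarrow> qop \<Rightarrow> qop \<Rightarrow> qop" where
  "qmult d A B = (\<lambda>x y. \<Sum>z\<in>bits d. A x z * B z y)"

definition qkron :: "nat \<Rightarrow> qop \<Rightarrow> qop \<Rightarrow> qop" where
  "qkron m A B = (\<lambda>x y. A (take m x) (take m y) * B (drop m x) (drop m y))"

definition qid :: qop where
  "qid = (\<lambda>x y. if x = y then 1 else 0)"

definition bra0 :: "nat \<Rightarrow> qop" where
  "bra0 a = (\<lambda>x y. if x = [] \<and> y = replicate a False then 1 else 0)"

definition ket0 :: "nat \<Rightarrow> qop" where
  "ket0 a = (\<lambda>x y. if x = replicate a False \<and> y = [] then 1 else 0)"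

definition hadamard :: qop where
  "hadamard = (\<lambda>x y. (if x = [True] \<and> y = [True] then -1 else 1) / complex_of_real (sqrt 2))"

definition pauliZ :: qop where
  "pauliZ = (\<lambda>x y. if x = y then (if x = [True] then -1 else 1) else 0)"

definition qunitary :: "nat \<Rightarrow> qop \<Rightarrow> bool" where
  "qunitary m U \<longleftrightarrow>
     (\<forall>x\<in>bits m. \<forall>y\<in>bits m. (\<Sum>z\<in>bits m. cnj (U z x) * U z y) = qid x y) \<and>
     (\<forall>x\<in>bits m. \<forall>y\<in>bits m. (\<Sum>z\<in>bits m. U x z * cnj (U y z)) = qid x y)"

text \<open>Operator with matrix M in the basis {st i | i in I} (zero elsewhere).\<close>
definition embed :: "('i \<Rightarrow> bool list) \<Rightarrow> 'i set \<Rightarrow> ('i \<Rightarrow> 'i \<Rightarrow> complex) \<Rightarrow> qop" where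
  "embed st I M = (\<lambda>a b. \<Sum>i\<in>I. \<Sum>j\<in>I. if a = st i \<and> b = st j then M i j else 0)"

text \<open>|sigma> = |x_sigma>|00> (positive), |x_sigma>|10> (negative),
|Theta> = |0^n>|01>.\<close>
fun state :: "nat \<Rightarrow> (nat set \<times> bool) option \<Rightarrow> bool list" where
  "state n None = replicate n False @ [False, True]"
| "state n (Some (\<sigma>, s)) = map (\<lambda>i. Suc i \<in> \<sigma>) [0..<n] @ [s, False]"

definition Pi_k :: "nat \<Rightarrow> nat set set \<Rightarrow> nat \<Rightarrow> qop" where
  "Pi_k n X k = embed (\<lambda>\<sigma>. state n (Some (\<sigma>, False))) (ksimplices X k) (\<lambda>i j. if i = j then 1 else 0)"

definition Pi_pm_k :: "nat \<Rightarrow> nat set set \<Rightarrow> nat \<Rightarrow> qop" where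
  "Pi_pm_k n X k = embed (\<lambda>\<sigma>s. state n (Some \<sigma>s)) (oriented_ksimplices X k) (\<lambda>i j. if i = j then 1 else 0)"

definition P_down_op :: "nat \<Rightarrow> (nat \<Rightarrow> real) \<Rightarrow> nat set set \<Rightarrow> nat \<Rightarrow> qop" where
  "P_down_op n w X k = embed (state n) (S_states X k) (\<lambda>s t. complex_of_real (P_down n w X k s t))"

definition Delta_down_op :: "nat \<Rightarrow> (nat \<Rightarrow> real) \<Rightarrow> nat set set \<Rightarrow> nat \<Rightarrow> qop" where
  "Delta_down_op n w X k = embed (\<lambda>\<sigma>. state n (Some (\<sigma>, False))) (ksimplices X k)
      (\<lambda>\<sigma> \<sigma>'. complex_of_real (Delta_down w k \<sigma> \<sigma>'))"

definition HZ_gate :: "nat \<Rightarrow> qop" where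
  "HZ_gate n = qkron n qid (qkron 1 (qmult 1 hadamard pauliZ) qid)"

end

theory Submission
  imports Defs
begin


lemma finite_bits: "finite (bits m)"
proof -
  have "bits m = {xs. set xs \<subseteq> (UNIV::bool set) \<and> length xs = m}" by (auto simp: bits_def)
  then show ?thesis using finite_lists_length_eq[of "UNIV::bool set" m] by simp
qed

lemma bits1: "bits 1 = {[False],[True]}"
  by (auto simp: bits_def length_Suc_conv)

lemma embed_at:
  assumes "finite I" "inj_on st I" "i \<in> I" "j \<in> I"
  shows "embed st I M (st i) (st j) = M i j"
proof -
  have "\<And>i' j'. i' \<in> I \<Longrightarrow> j' \<in> I \<Longrightarrow>
     (if st i = st i' \<and> st j = st j' then M i' j' else 0) = (if i' = i then (if j' = j then M i j else 0) else 0)"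
    using assms inj_on_eq_iff by (smt (verit))
  then have "embed st I M (st i) (st j) = (\<Sum>i'\<in>I. \<Sum>j'\<in>I. (if i' = i then (if j' = j then M i j else 0) else 0))"
    unfolding embed_def by (intro sum.cong refl) auto
  also have "\<dots> = (\<Sum>i'\<in>I. if i' = i then (\<Sum>j'\<in>I. if j' = j then M i j else 0) else 0)"
    by (intro sum.cong refl) auto
  also have "\<dots> = M i j" using assms by simp
  finally show ?thesis .
qed

lemma embed_out:
  assumes "a \<notin> st ` I \<or> b \<notin> st ` I"
  shows "embed st I M a b = 0"
  unfolding embed_def using assms by (intro sum.neutral ballI) auto

lemma proj_char:
  assumes "finite I" "inj_on st I"
  shows "embed st I (\<lambda>i j. if i = j then 1 else 0) a b = (if a = b \<and> a \<in> st ` I then 1 else 0)"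
proof (cases "a \<in> st ` I \<and> b \<in> st ` I")
  case True
  then obtain i j where "i \<in> I" "j \<in> I" "a = st i" "b = st j" by auto
  have "(i = j) = (a = b)" using \<open>i \<in> I\<close> \<open>j \<in> I\<close> \<open>a = st i\<close> \<open>b = st j\<close> assms(2)
    by (metis inj_on_eq_iff)
  then show ?thesis using embed_at[OF assms \<open>i \<in> I\<close> \<open>j \<in> I\<close>, of "\<lambda>i j. if i = j then 1 else 0"]
    \<open>a = st i\<close> \<open>b = st j\<close> True by simp
next
  case False
  then show ?thesis using embed_out[of a st I b] by auto
qed

lemma state_inj:
  assumes "\<sigma> \<subseteq> {1..n}" "\<tau> \<subseteq> {1..n}" "state n (Some (\<sigma>,s)) = state n (Some (\<tau>,t))"
  shows "\<sigma> = \<tau> \<and> s = t"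
proof -
  from assms(3) have e: "\<forall>i\<in>{0..<n}. (Suc i \<in> \<sigma>) = (Suc i \<in> \<tau>)" and st: "s = t" by auto
  have "\<sigma> = \<tau>"
  proof
    show "\<sigma> \<subseteq> \<tau>"
    proof
      fix x assume x: "x \<in> \<sigma>"
      then have "x \<ge> 1" "x \<le> n" using assms(1) by auto
      then show "x \<in> \<tau>" using e[rule_format, of "x - 1"] x by auto
    qed
    show "\<tau> \<subseteq> \<sigma>"
    proof
      fix x assume x: "x \<in> \<tau>"
      then have "x \<ge> 1" "x \<le> n" using assms(2) by auto
      then show "x \<in> \<sigma>" using e[rule_format, of "x - 1"] x by auto
    qed
  qed
  with st show ?thesis by simp
qed

lemma state_len: "length (state n s) = n + 2"
  by (cases s) auto


lemma take_drop_eq_app: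
  assumes "length a = m"
  shows "(take m z = a \<and> drop m z = r) \<longleftrightarrow> z = a @ r"
  using assms by (metis append_eq_conv_conj)

lemma sandwich:
  assumes P: "\<And>x y. P x y = (if x = y \<and> x \<in> A then 1 else 0)"
    and a: "a \<in> bits m" and b: "b \<in> bits m"
  shows "qmult (m+\<alpha>) (qmult (m+\<alpha>) (qkron m P (bra0 \<alpha>)) M) (qkron m P (ket0 \<alpha>)) a b
     = (if a \<in> A \<and> b \<in> A then M (a @ replicate \<alpha> False) (b @ replicate \<alpha> False) else 0)"
proof -
  let ?r = "replicate \<alpha> False"
  have la: "length a = m" and lb: "length b = m" using a b by (auto simp: bits_def)
  have L: "qkron m P (bra0 \<alpha>) a z = (if a \<in> A \<and> z = a @ ?r then 1 else 0)" for z
    using take_drop_eq_app[OF la, of z ?r] la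
    by (auto simp: qkron_def bra0_def P)
  have R: "qkron m P (ket0 \<alpha>) z b = (if b \<in> A \<and> z = b @ ?r then 1 else 0)" for z
    using take_drop_eq_app[OF lb, of z ?r] lb
    by (auto simp: qkron_def ket0_def P)
  have ain: "a @ ?r \<in> bits (m+\<alpha>)" and bin: "b @ ?r \<in> bits (m+\<alpha>)" using la lb by (auto simp: bits_def)
  have inner: "qmult (m+\<alpha>) (qkron m P (bra0 \<alpha>)) M a y = (if a \<in> A then M (a @ ?r) y else 0)" for y
  proof -
    have "qmult (m+\<alpha>) (qkron m P (bra0 \<alpha>)) M a y = (\<Sum>z\<in>bits (m+\<alpha>). if z = a @ ?r then (if a \<in> A then M (a @ ?r) y else 0) else 0)"
      unfolding qmult_def L by (intro sum.cong refl) auto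
    also have "\<dots> = (if a \<in> A then M (a @ ?r) y else 0)" using ain finite_bits by simp
    finally show ?thesis .
  qed
  have "qmult (m+\<alpha>) (qmult (m+\<alpha>) (qkron m P (bra0 \<alpha>)) M) (qkron m P (ket0 \<alpha>)) a b
     = (\<Sum>y\<in>bits (m+\<alpha>). if y = b @ ?r then (if a \<in> A \<and> b \<in> A then M (a @ ?r) (b @ ?r) else 0) else 0)"
    unfolding qmult_def[of "m+\<alpha>" "qmult (m+\<alpha>) (qkron m P (bra0 \<alpha>)) M"] inner R by (intro sum.cong refl) auto
  also have "\<dots> = (if a \<in> A \<and> b \<in> A then M (a @ ?r) (b @ ?r) else 0)" using bin finite_bits by simp
  finally show ?thesis .
qed

lemma sandwich2:
  assumes P: "\<And>x y. P x y = (if x = y \<and> x \<in> A then 1 else 0)"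
    and a: "a \<in> bits m" and b: "b \<in> bits m"
  shows "qmult m (qmult m P Q) P a b = (if a \<in> A \<and> b \<in> A then Q a b else 0)"
proof -
  have inner: "qmult m P Q a y = (if a \<in> A then Q a y else 0)" for y
  proof -
    have "qmult m P Q a y = (\<Sum>z\<in>bits m. if z = a then (if a \<in> A then Q a y else 0) else 0)"
      unfolding qmult_def P by (intro sum.cong refl) auto
    also have "\<dots> = (if a \<in> A then Q a y else 0)" using a finite_bits by simp
    finally show ?thesis .
  qed
  have "qmult m (qmult m P Q) P a b = (\<Sum>y\<in>bits m. if y = b then (if a \<in> A \<and> b \<in> A then Q a b else 0) else 0)"
    unfolding qmult_def[of m "qmult m P Q"] inner P by (intro sum.cong refl) auto
  also have "\<dots> = (if a \<in> A \<and> b \<in> A then Q a b else 0)" using b finite_bits by simp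
  finally show ?thesis .
qed

lemma HZ1: "qmult 1 hadamard pauliZ [False] [u] = (if u then -1 else 1) / complex_of_real (sqrt 2)"
  unfolding qmult_def bits1 by (cases u) (auto simp: hadamard_def pauliZ_def)


lemma G_apply:
  assumes p0: "length p0 = n" and z: "z \<in> bits (n+2+\<alpha>)"
  shows "qkron (n+2) (HZ_gate n) qid ((p0 @ [False,False]) @ replicate \<alpha> False) z
    = (if z = (p0 @ [False,False]) @ replicate \<alpha> False then 1 / complex_of_real (sqrt 2)
       else if z = (p0 @ [True,False]) @ replicate \<alpha> False then -1 / complex_of_real (sqrt 2) else 0)"
proof -
  have lz: "length z = n + 2 + \<alpha>" using z by (simp add: bits_def)
  obtain p u v r where zz: "z = p @ u # v # r" and lp: "length p = n" and lr: "length r = \<alpha>"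
  proof
    have "drop n z = (z ! n) # drop (Suc n) z" using lz Cons_nth_drop_Suc[of n z] by simp
    moreover have "drop (Suc n) z = (z ! Suc n) # drop (n+2) z" using lz Cons_nth_drop_Suc[of "Suc n" z] by simp
    ultimately show "z = take n z @ (z ! n) # (z ! Suc n) # drop (n+2) z"
      by (metis append_take_drop_id)
    show "length (take n z) = n" using lz by simp
    show "length (drop (n+2) z) = \<alpha>" using lz by simp
  qed
  show ?thesis
    unfolding zz HZ_gate_def qkron_def using lp lr p0
    using HZ1[of True] HZ1[of False] by (auto simp: qid_def)
qed


lemma sum_two:
  assumes "finite S" "s1 \<in> S" "s2 \<in> S" "s1 \<noteq> s2"
    and g: "\<And>z. z \<in> S \<Longrightarrow> g z = (if z = s1 then c1 else if z = s2 then c2 else 0)"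
  shows "(\<Sum>z\<in>S. g z * f z) = c1 * f s1 + (c2 * f s2 :: complex)"
proof -
  have "(\<Sum>z\<in>S. g z * f z) = (\<Sum>z\<in>S. (if z = s1 then c1 * f s1 else 0) + (if z = s2 then c2 * f s2 else 0))"
    using assms(4) by (intro sum.cong refl) (auto simp: g)
  also have "\<dots> = c1 * f s1 + c2 * f s2" using assms(1-3) by (simp add: sum.distrib)
  finally show ?thesis .
qed

lemma P_Delta:
  "P_down n w X k (Some (\<sigma>,False)) (Some (\<tau>,False)) - P_down n w X k (Some (\<sigma>,True)) (Some (\<tau>,False))
   = Delta_down w k \<sigma> \<tau> / K_down n w X k"
  by (cases "\<sigma> = \<tau>") (auto simp: Delta_down_def down_adj_def induced_orient_def diff_divide_distrib)


theorem proposition3p7: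
  fixes n k \<alpha> :: nat and w :: "nat \<Rightarrow> real" and X :: "nat set set" and U :: qop
  assumes X: "simplicial_complex n X"
    and w_pos: "\<forall>v\<in>{1..n}. w v > 0"
    and U_unitary: "qunitary (n + 2 + \<alpha>) U"
    and U_enc: "\<forall>a\<in>bits (n + 2). \<forall>b\<in>bits (n + 2).
      qmult (n + 2 + \<alpha>) (qmult (n + 2 + \<alpha>) (qkron (n + 2) (Pi_pm_k n X k) (bra0 \<alpha>)) U)
            (qkron (n + 2) (Pi_pm_k n X k) (ket0 \<alpha>)) a b
      = qmult (n + 2) (qmult (n + 2) (Pi_pm_k n X k) (P_down_op n w X k)) (Pi_pm_k n X k) a b"
  shows "\<forall>a\<in>bits (n + 2). \<forall>b\<in>bits (n + 2).
      qmult (n + 2 + \<alpha>)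
        (qmult (n + 2 + \<alpha>) (qkron (n + 2) (Pi_k n X k) (bra0 \<alpha>))
           (qmult (n + 2 + \<alpha>) (qkron (n + 2) (HZ_gate n) qid) U))
        (qkron (n + 2) (Pi_k n X k) (ket0 \<alpha>)) a b
      = Delta_down_op n w X k a b / complex_of_real (K_down n w X k * sqrt 2)"
proof (intro ballI)
  fix a b assume a: "a \<in> bits (n+2)" and b: "b \<in> bits (n+2)"
  let ?r = "replicate \<alpha> False"
  let ?st = "\<lambda>\<sigma>. state n (Some (\<sigma>, False))"
  let ?stt = "\<lambda>\<sigma>s. state n (Some \<sigma>s)"
  let ?Xk = "ksimplices X k"
  let ?OX = "oriented_ksimplices X k"
  have sub: "\<sigma> \<subseteq> {1..n}" if "\<sigma> \<in> ?Xk" for \<sigma>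
    using X that by (auto simp: simplicial_complex_def ksimplices_def)
  have finXk: "finite ?Xk"
    by (rule finite_subset[of _ "Pow {1..n}"]) (use sub in auto)
  have finOX: "finite ?OX" using finXk by (simp add: oriented_ksimplices_def)
  have finS: "finite (S_states X k)" using finOX by (simp add: S_states_def)
  have inj1: "inj_on ?st ?Xk"
    by (rule inj_onI) (use state_inj sub in blast)
  have inj2: "inj_on ?stt ?OX"
  proof (rule inj_onI)
    fix x y assume "x \<in> ?OX" "y \<in> ?OX" "?stt x = ?stt y"
    then show "x = y" using state_inj[of "fst x" n "fst y" "snd x" "snd y"] sub
      by (cases x, cases y) (auto simp: oriented_ksimplices_def)
  qed
  have inj3: "inj_on (state n) (S_states X k)"
  proof (rule inj_onI)
    fix x y assume x: "x \<in> S_states X k" and y: "y \<in> S_states X k" and e: "state n x = state n y"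
    show "x = y"
    proof (cases x)
      case None
      then show ?thesis using e by (cases y) auto
    next
      case (Some xs)
      show ?thesis
      proof (cases y)
        case None
        then show ?thesis using e Some by (cases xs) auto
      next
        case (Some ys)
        then have "xs \<in> ?OX" "ys \<in> ?OX" using x y \<open>x = Some xs\<close> by (auto simp: S_states_def)
        then show ?thesis using inj2 e Some \<open>x = Some xs\<close> by (auto dest: inj_onD)
      qed
    qed
  qed
  have PiK: "\<And>x y. Pi_k n X k x y = (if x = y \<and> x \<in> ?st ` ?Xk then 1 else 0)"
    unfolding Pi_k_def by (rule proj_char[OF finXk inj1])
  have PiPM: "\<And>x y. Pi_pm_k n X k x y = (if x = y \<and> x \<in> ?stt ` ?OX then 1 else 0)"
    unfolding Pi_pm_k_def by (rule proj_char[OF finOX inj2])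
  have Uenc: "U (?stt s @ ?r) (?stt t @ ?r) = complex_of_real (P_down n w X k (Some s) (Some t))"
    if s: "s \<in> ?OX" and t: "t \<in> ?OX" for s t
  proof -
    have sb: "?stt s \<in> bits (n+2)" and tb: "?stt t \<in> bits (n+2)" by (simp_all add: bits_def state_len)
    have "U (?stt s @ ?r) (?stt t @ ?r) = P_down_op n w X k (?stt s) (?stt t)"
      using U_enc[rule_format, OF sb tb] sandwich[OF PiPM sb tb, of \<alpha> U] sandwich2[OF PiPM sb tb, of "P_down_op n w X k"]
        s t by simp
    also have "\<dots> = complex_of_real (P_down n w X k (Some s) (Some t))"
      unfolding P_down_op_def using embed_at[OF finS inj3, of "Some s" "Some t"] s t
      by (simp add: S_states_def)
    finally show ?thesis .
  qed
  show "qmult (n + 2 + \<alpha>)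
        (qmult (n + 2 + \<alpha>) (qkron (n + 2) (Pi_k n X k) (bra0 \<alpha>))
           (qmult (n + 2 + \<alpha>) (qkron (n + 2) (HZ_gate n) qid) U))
        (qkron (n + 2) (Pi_k n X k) (ket0 \<alpha>)) a b
      = Delta_down_op n w X k a b / complex_of_real (K_down n w X k * sqrt 2)"
  proof (cases "a \<in> ?st ` ?Xk \<and> b \<in> ?st ` ?Xk")
    case True
    then obtain \<sigma> \<tau> where \<sigma>: "\<sigma> \<in> ?Xk" and \<tau>: "\<tau> \<in> ?Xk" and ab: "a = ?st \<sigma>" "b = ?st \<tau>" by auto
    let ?p0 = "map (\<lambda>i. Suc i \<in> \<sigma>) [0..<n]"
    have s1: "?st \<sigma> @ ?r = (?p0 @ [False,False]) @ ?r" by simp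
    have s2: "?stt (\<sigma>, True) @ ?r = (?p0 @ [True,False]) @ ?r" by simp
    have OX: "(\<sigma>,False) \<in> ?OX" "(\<sigma>,True) \<in> ?OX" "(\<tau>,False) \<in> ?OX" using \<sigma> \<tau> by (auto simp: oriented_ksimplices_def)
    have "qmult (n + 2 + \<alpha>) (qkron (n + 2) (HZ_gate n) qid) U (?st \<sigma> @ ?r) (?st \<tau> @ ?r)
        = 1 / complex_of_real (sqrt 2) * U (?st \<sigma> @ ?r) (?st \<tau> @ ?r)
          + -1 / complex_of_real (sqrt 2) * U (?stt (\<sigma>, True) @ ?r) (?st \<tau> @ ?r)"
      unfolding qmult_def
      by (rule sum_two[OF finite_bits]) (use G_apply[of ?p0 n _ \<alpha>] in \<open>auto simp: bits_def\<close>)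
    also have "\<dots> = complex_of_real ((P_down n w X k (Some (\<sigma>,False)) (Some (\<tau>,False))
          - P_down n w X k (Some (\<sigma>,True)) (Some (\<tau>,False))) / sqrt 2)"
      using Uenc[OF OX(1) OX(3)] Uenc[OF OX(2) OX(3)] by (simp del: P_down.simps add: diff_divide_distrib)
    also have "\<dots> = complex_of_real (Delta_down w k \<sigma> \<tau> / (K_down n w X k * sqrt 2))"
      by (simp only: P_Delta) (simp del: P_down.simps)
    also have "\<dots> = Delta_down_op n w X k a b / complex_of_real (K_down n w X k * sqrt 2)"
      unfolding Delta_down_op_def ab using embed_at[OF finXk inj1 \<sigma> \<tau>] by simp
    finally show ?thesis using sandwich[OF PiK a b] True ab by simp
  next
    case False
    have "Delta_down_op n w X k a b = 0"
      unfolding Delta_down_op_def using False by (intro embed_out) auto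
    then show ?thesis by (subst sandwich[OF PiK a b]) (simp only: if_not_P[OF False] div_0)
  qed
qed

end
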